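(* Let $(G,\rho)$ and $(G',\rho')$ be ribbon graphs on the same two vertices $v,w$, each having $n$ edges (all joining $v$ and $w$). Let $\hat\gamma:\operatorname{Pic}^0(G)\to\operatorname{Pic}^0(G')$ be the isomorphism induced by the identity on $V_{gen}=\{v,w\}$ (sending the class of a configuration to the class of the configuration with the same number of chips on each vertex). Fix $\alpha\in\{\text{rotor routing},\text{Bernardi}\}$ and suppose there is a bijection $\varphi:\mathcal T(G)\to\mathcal T(G')$ such that for each $u\in\{v,w\}$, $\varphi(\alpha_u^{G}(S,T))=\alpha_u^{G'}(\hat\gamma(S),\varphi(T))$ for all $S\in\operatorname{Pic}^0(G)$, $T\in\mathcal T(G)$. Then $(G,\rho)$ and $(G',\rho')$ have the same genus.
   Context: Graphs are finite, connected, loopless, possibly with multiple edges; a two-vertex such graph with $n$ edges has $\operatorname{Pic}^0\cong\mathbb Z/n\mathbb Z$ and its spanning trees are the single edges. A ribbon graph assigns to each vertex $u$ a cyclic order $\rho_u$ on incident edges. $\operatorname{Pic}^0$ is degree-zero chip configurations modulo firings (firing $u$ sends one chip from $u$ along each incident edge); $\operatorname{Pic}^k$ likewise for degree $k$. Rotor routing torsor $r_u$: for $S\in\operatorname{Pic}^0$, $T\in\mathcal T$, take a representative of $S$ nonnegative away from $u$; orient $T$ towards $u$ giving each other vertex a rotor; while some vertex $x\neq u$ has positive chips, advance its rotor to the next edge of $\rho_x$ and send a chip along it; at the end the rotors form $r_u(S,T)$. Bernardi torsor $\beta_u$: using half-edges $(e,x)$, for $T$ start at $(e_0,u)$ with $e_0$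 a fixed edge at $u$; at $(e',x')$: if $e'\in T$ with other endpoint $y$, move to $(e'',y)$, $e''$ following $e'$ in $\rho_y$; if $e'\notin T$, move to $(\tilde e,x')$, $\tilde e$ following $e'$ in $\rho_{x'}$, placing a chip on $x'$ if the other half-edge of $e'$ was not yet visited; stop on return to $(e_0,u)$. This gives divisors $D_T$ of degree $|E|-|V|+1$ in bijection with $\operatorname{Pic}^{|E|-|V|+1}$, and $\beta_u(S,T)$ is the unique $T'$ with $[D_{T'}]=[D_T]+S$. Genus: a cycle is a closed walk which, entering $x$ along $e$, exits along the edge following $e$ in $\rho_x$; the genus $g$ satisfies $2g=2-|V|+|E|-\operatorname{cyc}$, with $\operatorname{cyc}$ the number of cycles. *)

theory Defs
  imports Complex_Main "HOL-Library.While_Combinator"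
begin

text \<open>The two vertices are Vv and Vw; the n edges
  (all joining Vv and Vw) are labelled 0, ..., n-1.  A ribbon structure assigns
  to each vertex x a cyclic order on the incident edges (= all edges), given by
  its successor function rho x.\<close>

datatype vtx = Vv | Vw

fun other :: "vtx \<Rightarrow> vtx" where
  "other Vv = Vw"
| "other Vw = Vv"

definition cyclic_order :: "nat \<Rightarrow> (nat \<Rightarrow> nat) \<Rightarrow> bool" where
  "cyclic_order n f \<longleftrightarrow> bij_betw f {..<n} {..<n} \<and>
     (\<forall>e\<in>{..<n}. \<forall>e'\<in>{..<n}. \<exists>k. (f ^^ k) e = e')"

text \<open>A connected two-vertex ribbon graph with n edges (connected: n >= 1).\<close>
definition ribbon2 :: "nat \<Rightarrow> (vtx \<Rightarrow> nat \<Rightarrow> nat) \<Rightarrow> bool" where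
  "ribbon2 n \<rho> \<longleftrightarrow> n \<ge> 1 \<and> (\<forall>x. cyclic_order n (\<rho> x))"

text \<open>Spanning trees are the single edges, so a tree is represented by its edge e < n.\<close>

type_synonym config = "vtx \<Rightarrow> int"

definition deg :: "config \<Rightarrow> int" where
  "deg D = D Vv + D Vw"

text \<open>Linear equivalence: D' is obtained from D by firing each vertex x
  a x times (firing x sends one chip along each of the n incident edges).\<close>
definition lin_equiv :: "nat \<Rightarrow> config \<Rightarrow> config \<Rightarrow> bool" where
  "lin_equiv n D D' \<longleftrightarrow>
     (\<exists>a :: vtx \<Rightarrow> int. \<forall>x. D' x = D x - a x * int n + a (other x) * int n)"

text \<open>Rotor routing torsor r_u(S,T), S given by a degree-0 representative D.\<close>
definition rotor_routing :: "nat \<Rightarrow> (vtx \<Rightarrow> nat \<Rightarrow> nat) \<Rightarrow> vtx \<Rightarrow> config \<Rightarrow> nat \<Rightarrow> nat" where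
  "rotor_routing n \<rho> u D T =
     (let x = other u;
          D0 = (SOME D'. lin_equiv n D D' \<and> D' x \<ge> 0)
      in snd (while (\<lambda>(C, r). C x > 0)
                    (\<lambda>(C, r). (let r' = \<rho> x r in (C(x := C x - 1, u := C u + 1), r')))
                    (D0, T)))"

text \<open>One step of Bernardi's tour for the tree T (single edge).
  State: current half-edge, set of visited half-edges, chips placed so far.\<close>
definition bstep :: "(vtx \<Rightarrow> nat \<Rightarrow> nat) \<Rightarrow> nat \<Rightarrow>
    (nat \<times> vtx) \<times> (nat \<times> vtx) set \<times> config \<Rightarrow> (nat \<times> vtx) \<times> (nat \<times> vtx) set \<times> config" where
  "bstep \<rho> T s =
     (case s of ((e', x'), vis, D) \<Rightarrow>
        if e' = T then
          (let y = other x'; h = (\<rho> y e', y) in (h, insert h vis, D))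
        else
          (let h = (\<rho> x' e', x') in
            (h, insert h vis, if (e', other x') \<notin> vis then D(x' := D x' + 1) else D)))"

definition bernardi_div :: "(vtx \<Rightarrow> nat \<Rightarrow> nat) \<Rightarrow> vtx \<Rightarrow> nat \<Rightarrow> nat \<Rightarrow> config" where
  "bernardi_div \<rho> u e0 T =
     (let s0 = ((e0, u), {(e0, u)}, (\<lambda>_. 0) :: config)
      in snd (snd (while (\<lambda>s. fst s \<noteq> (e0, u)) (bstep \<rho> T) (bstep \<rho> T s0))))"

definition bernardi :: "nat \<Rightarrow> (vtx \<Rightarrow> nat \<Rightarrow> nat) \<Rightarrow> vtx \<Rightarrow> nat \<Rightarrow> config \<Rightarrow> nat \<Rightarrow> nat" where
  "bernardi n \<rho> u e0 D T =
     (THE T'. T' < n \<and> lin_equiv n (bernardi_div \<rho> u e0 T') (\<lambda>x. bernardi_div \<rho> u e0 T x + D x))"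

text \<open>Cycles (faces): a state (e,x) means "entering x along e"; the walk then exits
  x along rho x e, entering the other vertex.\<close>
definition face_step :: "(vtx \<Rightarrow> nat \<Rightarrow> nat) \<Rightarrow> nat \<times> vtx \<Rightarrow> nat \<times> vtx" where
  "face_step \<rho> d = (case d of (e, x) \<Rightarrow> (\<rho> x e, other x))"

definition darts :: "nat \<Rightarrow> (nat \<times> vtx) set" where
  "darts n = {..<n} \<times> UNIV"

definition num_cycles :: "nat \<Rightarrow> (vtx \<Rightarrow> nat \<Rightarrow> nat) \<Rightarrow> nat" where
  "num_cycles n \<rho> = card (darts n //
     {(a, b). a \<in> darts n \<and> b \<in> darts n \<and> (\<exists>k. (face_step \<rho> ^^ k) a = b)})"

definition genus :: "nat \<Rightarrow> (vtx \<Rightarrow> nat \<Rightarrow> nat) \<Rightarrow> real" where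
  "genus n \<rho> = (2 - real (card (UNIV :: vtx set)) + real n - real (num_cycles n \<rho>)) / 2"

end

theory Submission
  imports Defs
begin


lemma cyc_maps: "cyclic_order n f \<Longrightarrow> e < n \<Longrightarrow> f e < n"
  unfolding cyclic_order_def bij_betw_def by auto

lemma cyc_pow_maps: "cyclic_order n f \<Longrightarrow> e < n \<Longrightarrow> (f^^i) e < n"
  by (induction i) (auto simp: cyc_maps)

lemma funpow_mult_fix: "(f^^d) e = e \<Longrightarrow> (f^^(d*q)) e = e"
proof (induction q)
  case (Suc q)
  have "(f^^(d * Suc q)) e = (f^^d) ((f^^(d*q)) e)"
    by (simp add: funpow_add add.commute)
  then show ?case using Suc by simp
qed simp

lemma funpow_mod_fix: "(f^^d) e = e \<Longrightarrow> (f^^m) e = (f^^(m mod d)) e"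
proof -
  assume h: "(f^^d) e = e"
  have "m = m mod d + d * (m div d)" by simp
  then have "(f^^m) e = (f^^(m mod d)) ((f^^(d * (m div d))) e)"
    by (metis funpow_add comp_apply)
  then show ?thesis using funpow_mult_fix[OF h] by simp
qed

lemma cyc_min: assumes c: "cyclic_order n f" and e: "e < n" and d: "(f^^d) e = e" "0 < d"
  shows "n \<le> d"
proof -
  have "{..<n} \<subseteq> (\<lambda>i. (f^^i) e) ` {..<d}"
  proof
    fix e' assume "e' \<in> {..<n}"
    then obtain k where "(f^^k) e = e'" using c e unfolding cyclic_order_def by auto
    then have "(f^^(k mod d)) e = e'" using funpow_mod_fix[OF d(1)] by simp
    moreover have "k mod d < d" using d(2) by simp
    ultimately show "e' \<in> (\<lambda>i. (f^^i) e) ` {..<d}" by blast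
  qed
  then have "card {..<n} \<le> card ((\<lambda>i. (f^^i) e) ` {..<d})" by (intro card_mono) auto
  also have "\<dots> \<le> d" using card_image_le[of "{..<d}"] by simp
  finally show ?thesis by simp
qed

lemma cyc_period: assumes c: "cyclic_order n f" and e: "e < n"
  shows "(f^^n) e = e"
proof -
  let ?h = "\<lambda>i. (f^^i) e"
  have "\<not> inj_on ?h {..n}"
  proof
    assume "inj_on ?h {..n}"
    then have "card {..n} \<le> card {..<n}"
      by (rule card_inj_on_le) (auto simp: cyc_pow_maps[OF c e])
    then show False by simp
  qed
  then obtain i j where ij: "i \<le> n" "j \<le> n" "i < j" "?h i = ?h j"
    unfolding inj_on_def by (metis atMost_iff linorder_neqE_nat)
  have "(f^^(j-i)) ((f^^i) e) = (f^^i) e"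
    using ij by (metis funpow_add comp_apply le_add_diff_inverse2 less_imp_le)
  then have "n \<le> j - i" using cyc_min[OF c cyc_pow_maps[OF c e]] ij by simp
  then have "i = 0" "j = n" using ij by auto
  then show ?thesis using ij by simp
qed

lemma cyc_mod: "cyclic_order n f \<Longrightarrow> e < n \<Longrightarrow> (f^^m) e = (f^^(m mod n)) e"
  using funpow_mod_fix cyc_period by metis

lemma cyc_distinct: assumes c: "cyclic_order n f" and e: "e < n" and "i < n" "j < n"
  and eq: "(f^^i) e = (f^^j) e" shows "i = j"
proof (rule ccontr)
  assume "i \<noteq> j"
  then consider "i < j" | "j < i" by linarith
  then show False
  proof cases
    case 1
    have "(f^^(j-i)) ((f^^i) e) = (f^^i) e"
      using 1 eq by (metis funpow_add comp_apply le_add_diff_inverse2 less_imp_le)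
    then have "n \<le> j - i" using cyc_min[OF c cyc_pow_maps[OF c e]] 1 by simp
    then show False using assms 1 by simp
  next
    case 2
    have "(f^^(i-j)) ((f^^j) e) = (f^^j) e"
      using 2 eq by (metis funpow_add comp_apply le_add_diff_inverse2 less_imp_le)
    then have "n \<le> i - j" using cyc_min[OF c cyc_pow_maps[OF c e]] 2 by simp
    then show False using assms 2 by simp
  qed
qed

lemma cyc_reach: assumes c: "cyclic_order n f" and "e < n" "e' < n"
  shows "\<exists>k<n. (f^^k) e = e'"
proof -
  obtain k where "(f^^k) e = e'" using assms unfolding cyclic_order_def by auto
  then have "(f^^(k mod n)) e = e'" using cyc_mod[OF c \<open>e<n\<close>] by simp
  moreover have "k mod n < n" using assms by simp
  ultimately show ?thesis by blast
qed

lemma while_funpow: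
  "(\<forall>i<m. b ((c^^i) s)) \<Longrightarrow> \<not> b ((c^^m) s) \<Longrightarrow> while b c s = (c^^m) s"
proof (induction m arbitrary: s)
  case 0 then show ?case by (simp add: while_unfold)
next
  case (Suc m)
  have "b s" using Suc.prems(1) by (metis funpow_0 zero_less_Suc)
  then have "while b c s = while b c (c s)" by (simp add: while_unfold)
  also have "\<dots> = (c^^m) (c s)"
  proof (rule Suc.IH)
    show "\<forall>i<m. b ((c^^i) (c s))"
    proof (intro allI impI)
      fix i assume "i < m"
      then have "Suc i < Suc m" by simp
      then have "b ((c^^(Suc i)) s)" using Suc.prems(1) by blast
      then show "b ((c^^i) (c s))" by (simp only: funpow_Suc_right comp_apply)
    qed
    have "\<not> b ((c^^(Suc m)) s)" using Suc.prems(2) .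
    then show "\<not> b ((c^^m) (c s))" by (metis funpow_Suc_right comp_apply)
  qed
  finally show ?case by (simp only: funpow_Suc_right comp_apply)
qed

lemma funpow_Suc': "(f^^Suc m) x = (f^^m) (f x)"
  by (metis funpow_Suc_right o_apply)

lemma other_other[simp]: "other (other x) = x" by (cases x) auto
lemma other_neq[simp]: "other x \<noteq> x" "x \<noteq> other x" by (cases x, auto)+




lemma rr_loop:
  assumes "x \<noteq> u"
  shows "C x = int m \<Longrightarrow> snd (while (\<lambda>(C, r). C x > 0)
                    (\<lambda>(C, r). (let r' = \<rho> x r in (C(x := C x - 1, u := C u + 1), r')))
                    (C, r)) = (\<rho> x ^^ m) r"
proof (induction m arbitrary: C r)
  case 0 then show ?case by (simp add: while_unfold)
next
  case (Suc m)
  have "while (\<lambda>(C, r). C x > 0)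
                    (\<lambda>(C, r). (let r' = \<rho> x r in (C(x := C x - 1, u := C u + 1), r')))
                    (C, r) = while (\<lambda>(C, r). C x > 0)
                    (\<lambda>(C, r). (let r' = \<rho> x r in (C(x := C x - 1, u := C u + 1), r')))
                    (C(x := C x - 1, u := C u + 1), \<rho> x r)"
    using Suc.prems by (subst while_unfold) simp
  also have "snd \<dots> = (\<rho> x ^^ m) (\<rho> x r)"
    by (rule Suc.IH) (use Suc.prems assms in simp)
  also have "\<dots> = (\<rho> x ^^ Suc m) r" by (metis funpow_Suc_right o_apply)
  finally show ?case .
qed

lemma rr_eq:
  assumes r: "ribbon2 n \<rho>" and T: "T < n"
  shows "rotor_routing n \<rho> u D T = (\<rho> (other u) ^^ nat (D (other u) mod int n)) T"
proof -
  let ?x = "other u"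
  let ?P = "\<lambda>D'. lin_equiv n D D' \<and> D' ?x \<ge> 0"
  define D0 where "D0 = (SOME D'. ?P D')"
  have n: "n \<ge> 1" and c: "cyclic_order n (\<rho> ?x)" using r unfolding ribbon2_def by auto
  define W where "W = (\<lambda>z. D z - (if z = ?x then - \<bar>D ?x\<bar> else 0) * int n + (if other z = ?x then - \<bar>D ?x\<bar> else 0) * int n)"
  have "?P W"
  proof
    show "lin_equiv n D W" unfolding lin_equiv_def W_def
      by (rule exI[of _ "\<lambda>z. if z = ?x then - \<bar>D ?x\<bar> else 0"]) simp
    have "D ?x + \<bar>D ?x\<bar> * int n \<ge> 0"
    proof -
      have "\<bar>D ?x\<bar> * int n \<ge> \<bar>D ?x\<bar>" using n by (simp add: mult_le_cancel_left1)
      then show ?thesis by linarith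
    qed
    then show "W ?x \<ge> 0" unfolding W_def by simp
  qed
  then have P: "?P D0" unfolding D0_def by (rule someI[where x=W])
  then obtain a where a: "\<forall>z. D0 z = D z - a z * int n + a (other z) * int n"
    unfolding lin_equiv_def by blast
  have "D0 ?x = D ?x + (a u - a ?x) * int n"
    using a[rule_format, of ?x] by (simp add: algebra_simps)
  then have modeq: "D0 ?x mod int n = D ?x mod int n"
    by (metis mod_mult_self1)
  have "rotor_routing n \<rho> u D T = (\<rho> ?x ^^ nat (D0 ?x)) T"
    unfolding rotor_routing_def Let_def D0_def[symmetric]
    using rr_loop[of ?x u D0 "nat (D0 ?x)" \<rho> T] P unfolding Let_def by simp
  also have "\<dots> = (\<rho> ?x ^^ (nat (D0 ?x) mod n)) T" by (rule cyc_mod[OF c T])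
  also have "nat (D0 ?x) mod n = nat (D ?x mod int n)"
    using P modeq by (metis nat_int of_nat_mod int_nat_eq zmod_int order.refl nat_mod_distrib of_nat_0_le_iff)
  finally show ?thesis .
qed




lemma bstep_tree: "e' = T \<Longrightarrow> bstep \<rho> T ((e',x'),vis,D) =
  ((\<rho> (other x') e', other x'), insert (\<rho> (other x') e', other x') vis, D)"
  unfolding bstep_def by (simp add: Let_def)

lemma bstep_non: "e' \<noteq> T \<Longrightarrow> bstep \<rho> T ((e',x'),vis,D) =
  ((\<rho> x' e', x'), insert (\<rho> x' e', x') vis, if (e', other x') \<notin> vis then D(x' := D x' + 1) else D)"
  unfolding bstep_def by (simp add: Let_def)

context
  fixes n :: nat and \<rho> :: "vtx \<Rightarrow> nat \<Rightarrow> nat" and u :: vtx and e0 k :: nat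
  assumes r: "ribbon2 n \<rho>" and e0: "e0 < n" and k: "k < n"
begin


lemma cf: "cyclic_order n (\<rho> u)" using r unfolding ribbon2_def by auto
lemma cg: "cyclic_order n (\<rho> (other u))" using r unfolding ribbon2_def by auto
lemma Tn: "((\<rho> u^^k) e0) < n" using cyc_pow_maps[OF cf e0] .

lemma phase1: "j \<le> k \<Longrightarrow> (bstep \<rho> ((\<rho> u^^k) e0) ^^ j) ((e0, u), {(e0, u)}, (\<lambda>_. 0) :: config) =
   (((\<rho> u^^j) e0, u), (\<lambda>i. ((\<rho> u^^i) e0, u)) ` {..j}, (\<lambda>_. 0)(u := int j))"
proof (induction j)
  case 0 then show ?case by (simp add: fun_eq_iff)
next
  case (Suc j)
  have ne: "(\<rho> u^^j) e0 \<noteq> ((\<rho> u^^k) e0)"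
    using cyc_distinct[OF cf e0, of j k] Suc.prems k by auto
  have nv: "((\<rho> u^^j) e0, other u) \<notin> (\<lambda>i. ((\<rho> u^^i) e0, u)) ` {..j}" by auto
  have "(bstep \<rho> ((\<rho> u^^k) e0) ^^ Suc j) ((e0, u), {(e0, u)}, (\<lambda>_. 0) :: config) = bstep \<rho> ((\<rho> u^^k) e0) ((bstep \<rho> ((\<rho> u^^k) e0) ^^ j) ((e0, u), {(e0, u)}, (\<lambda>_. 0) :: config))" by simp
  also have "\<dots> = (((\<rho> u^^Suc j) e0, u), (\<lambda>i. ((\<rho> u^^i) e0, u)) ` {..Suc j}, (\<lambda>_. 0)(u := int (Suc j)))"
    unfolding Suc.IH[OF Suc_leD[OF Suc.prems]]
    by (subst bstep_non[OF ne]) (simp add: nv atMost_Suc add.commute)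
  finally show ?case .
qed



lemma phase2: "1 \<le> j \<Longrightarrow> j \<le> n \<longrightarrow> (\<exists>vis. (bstep \<rho> ((\<rho> u^^k) e0) ^^ (k+j)) ((e0, u), {(e0, u)}, (\<lambda>_. 0) :: config) =
   (((\<rho> (other u)^^j) ((\<rho> u^^k) e0), other u), vis, (((\<lambda>_. 0)(u := int k, other u := int (card (((\<lambda>i. (\<rho> (other u)^^i) ((\<rho> u^^k) e0)) ` {1..<j}) - ((\<lambda>i. (\<rho> u^^i) e0) ` {..k}))))) :: config)) \<and> (\<forall>e. (e,u) \<in> vis \<longleftrightarrow> e \<in> ((\<lambda>i. (\<rho> u^^i) e0) ` {..k})) \<and>
   (\<forall>i. 1 \<le> i \<and> i \<le> j \<longrightarrow> ((\<rho> (other u)^^i) ((\<rho> u^^k) e0), other u) \<in> vis))"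
proof (induction j rule: nat_induct_at_least)
  case base
  let ?V = "(\<lambda>i. ((\<rho> u^^i) e0, u)) ` {..k}"
  have "(bstep \<rho> ((\<rho> u^^k) e0) ^^ (k+1)) ((e0, u), {(e0, u)}, (\<lambda>_. 0) :: config) = bstep \<rho> ((\<rho> u^^k) e0) ((bstep \<rho> ((\<rho> u^^k) e0) ^^ k) ((e0, u), {(e0, u)}, (\<lambda>_. 0) :: config))" by simp
  also have "\<dots> = ((\<rho> (other u) ((\<rho> u^^k) e0), other u), insert (\<rho> (other u) ((\<rho> u^^k) e0), other u) ?V, (\<lambda>_. 0)(u := int k))"
    unfolding phase1[OF order.refl] by (subst bstep_tree) auto
  also have "(\<lambda>_. 0)(u := int k) = (((\<lambda>_. 0)(u := int k, other u := int (card (((\<lambda>i. (\<rho> (other u)^^i) ((\<rho> u^^k) e0)) ` {1..<1}) - ((\<lambda>i. (\<rho> u^^i) e0) ` {..k}))))) :: config)" by (simp add: fun_eq_iff)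
  finally show ?case
    by (intro impI exI[of _ "insert (\<rho> (other u) ((\<rho> u^^k) e0), other u) ?V"]) auto
next
  case (Suc j)
  show ?case
  proof
    assume sj: "Suc j \<le> n"
    then obtain vis where st: "(bstep \<rho> ((\<rho> u^^k) e0) ^^ (k+j)) ((e0, u), {(e0, u)}, (\<lambda>_. 0) :: config) = (((\<rho> (other u)^^j) ((\<rho> u^^k) e0), other u), vis, (((\<lambda>_. 0)(u := int k, other u := int (card (((\<lambda>i. (\<rho> (other u)^^i) ((\<rho> u^^k) e0)) ` {1..<j}) - ((\<lambda>i. (\<rho> u^^i) e0) ` {..k}))))) :: config))"
      and vu: "\<forall>e. (e,u) \<in> vis \<longleftrightarrow> e \<in> ((\<lambda>i. (\<rho> u^^i) e0) ` {..k})"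
      and vy: "\<forall>i. 1 \<le> i \<and> i \<le> j \<longrightarrow> ((\<rho> (other u)^^i) ((\<rho> u^^k) e0), other u) \<in> vis"
      using Suc.IH Suc_leD[OF sj] by blast
    have ne: "(\<rho> (other u)^^j) ((\<rho> u^^k) e0) \<noteq> ((\<rho> u^^k) e0)"
      using cyc_distinct[OF cg Tn, of j 0] Suc.hyps sj by auto
    have nB: "(\<rho> (other u)^^j) ((\<rho> u^^k) e0) \<notin> ((\<lambda>i. (\<rho> (other u)^^i) ((\<rho> u^^k) e0)) ` {1..<j})"
    proof
      assume "(\<rho> (other u)^^j) ((\<rho> u^^k) e0) \<in> ((\<lambda>i. (\<rho> (other u)^^i) ((\<rho> u^^k) e0)) ` {1..<j})"
      then obtain i where "i \<in> {1..<j}" "(\<rho> (other u)^^j) ((\<rho> u^^k) e0) = (\<rho> (other u)^^i) ((\<rho> u^^k) e0)" by auto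
      then show False using cyc_distinct[OF cg Tn, of j i] sj by auto
    qed
    have BS: "((\<lambda>i. (\<rho> (other u)^^i) ((\<rho> u^^k) e0)) ` {1..<Suc j}) = insert ((\<rho> (other u)^^j) ((\<rho> u^^k) e0)) (((\<lambda>i. (\<rho> (other u)^^i) ((\<rho> u^^k) e0)) ` {1..<j}))"
      using Suc.hyps by (auto simp: atLeastLessThanSuc)
    have D: "(if ((\<rho> (other u)^^j) ((\<rho> u^^k) e0), other (other u)) \<notin> vis then ((((\<lambda>_. 0)(u := int k, other u := int (card (((\<lambda>i. (\<rho> (other u)^^i) ((\<rho> u^^k) e0)) ` {1..<j}) - ((\<lambda>i. (\<rho> u^^i) e0) ` {..k}))))) :: config))(other u := (((\<lambda>_. 0)(u := int k, other u := int (card (((\<lambda>i. (\<rho> (other u)^^i) ((\<rho> u^^k) e0)) ` {1..<j}) - ((\<lambda>i. (\<rho> u^^i) e0) ` {..k}))))) :: config) (other u) + 1) else (((\<lambda>_. 0)(u := int k, other u := int (card (((\<lambda>i. (\<rho> (other u)^^i) ((\<rho> u^^k) e0)) ` {1..<j}) - ((\<lambda>i. (\<rho> u^^i) e0) ` {..k}))))) :: config))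
        = (((\<lambda>_. 0)(u := int k, other u := int (card (((\<lambda>i. (\<rho> (other u)^^i) ((\<rho> u^^k) e0)) ` {1..<Suc j}) - ((\<lambda>i. (\<rho> u^^i) e0) ` {..k}))))) :: config)"
    proof (cases "(\<rho> (other u)^^j) ((\<rho> u^^k) e0) \<in> ((\<lambda>i. (\<rho> u^^i) e0) ` {..k})")
      case True
      then have "((\<lambda>i. (\<rho> (other u)^^i) ((\<rho> u^^k) e0)) ` {1..<Suc j}) - ((\<lambda>i. (\<rho> u^^i) e0) ` {..k}) = ((\<lambda>i. (\<rho> (other u)^^i) ((\<rho> u^^k) e0)) ` {1..<j}) - ((\<lambda>i. (\<rho> u^^i) e0) ` {..k})" using BS by auto
      then show ?thesis using True vu by simp
    next
      case False
      then have "((\<lambda>i. (\<rho> (other u)^^i) ((\<rho> u^^k) e0)) ` {1..<Suc j}) - ((\<lambda>i. (\<rho> u^^i) e0) ` {..k}) = insert ((\<rho> (other u)^^j) ((\<rho> u^^k) e0)) (((\<lambda>i. (\<rho> (other u)^^i) ((\<rho> u^^k) e0)) ` {1..<j}) - ((\<lambda>i. (\<rho> u^^i) e0) ` {..k}))" using BS by auto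
      then have "card (((\<lambda>i. (\<rho> (other u)^^i) ((\<rho> u^^k) e0)) ` {1..<Suc j}) - ((\<lambda>i. (\<rho> u^^i) e0) ` {..k})) = Suc (card (((\<lambda>i. (\<rho> (other u)^^i) ((\<rho> u^^k) e0)) ` {1..<j}) - ((\<lambda>i. (\<rho> u^^i) e0) ` {..k})))" using nB by simp
      then show ?thesis using False vu by (simp add: fun_eq_iff)
    qed
    have "(bstep \<rho> ((\<rho> u^^k) e0) ^^ (k + Suc j)) ((e0, u), {(e0, u)}, (\<lambda>_. 0) :: config) = bstep \<rho> ((\<rho> u^^k) e0) ((bstep \<rho> ((\<rho> u^^k) e0) ^^ (k+j)) ((e0, u), {(e0, u)}, (\<lambda>_. 0) :: config))" by simp
    also have "\<dots> = (((\<rho> (other u)^^Suc j) ((\<rho> u^^k) e0), other u), insert ((\<rho> (other u)^^Suc j) ((\<rho> u^^k) e0), other u) vis, (((\<lambda>_. 0)(u := int k, other u := int (card (((\<lambda>i. (\<rho> (other u)^^i) ((\<rho> u^^k) e0)) ` {1..<Suc j}) - ((\<lambda>i. (\<rho> u^^i) e0) ` {..k}))))) :: config))"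
      unfolding st by (subst bstep_non[OF ne]) (simp only: D, simp)
    finally show "\<exists>vis. (bstep \<rho> ((\<rho> u^^k) e0) ^^ (k + Suc j)) ((e0, u), {(e0, u)}, (\<lambda>_. 0) :: config) = (((\<rho> (other u)^^Suc j) ((\<rho> u^^k) e0), other u), vis, (((\<lambda>_. 0)(u := int k, other u := int (card (((\<lambda>i. (\<rho> (other u)^^i) ((\<rho> u^^k) e0)) ` {1..<Suc j}) - ((\<lambda>i. (\<rho> u^^i) e0) ` {..k}))))) :: config)) \<and>
      (\<forall>e. (e,u) \<in> vis \<longleftrightarrow> e \<in> ((\<lambda>i. (\<rho> u^^i) e0) ` {..k})) \<and>
      (\<forall>i. 1 \<le> i \<and> i \<le> Suc j \<longrightarrow> ((\<rho> (other u)^^i) ((\<rho> u^^k) e0), other u) \<in> vis)"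
      using vu vy by (intro exI[of _ "insert ((\<rho> (other u)^^Suc j) ((\<rho> u^^k) e0), other u) vis"]) (auto simp: le_Suc_eq)
  qed
qed

lemma img_g: "(\<lambda>i. (\<rho> (other u)^^i) ((\<rho> u^^k) e0)) ` {1..<n} = {..<n} - {((\<rho> u^^k) e0)}"
proof
  show "(\<lambda>i. (\<rho> (other u)^^i) ((\<rho> u^^k) e0)) ` {1..<n} \<subseteq> {..<n} - {((\<rho> u^^k) e0)}"
  proof
    fix x assume "x \<in> (\<lambda>i. (\<rho> (other u)^^i) ((\<rho> u^^k) e0)) ` {1..<n}"
    then obtain i where i: "1 \<le> i" "i < n" "x = (\<rho> (other u)^^i) ((\<rho> u^^k) e0)" by auto
    have "x < n" using i cyc_pow_maps[OF cg Tn] by simp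
    moreover have "x \<noteq> ((\<rho> u^^k) e0)" using i cyc_distinct[OF cg Tn, of i 0] by auto
    ultimately show "x \<in> {..<n} - {((\<rho> u^^k) e0)}" by simp
  qed
  show "{..<n} - {((\<rho> u^^k) e0)} \<subseteq> (\<lambda>i. (\<rho> (other u)^^i) ((\<rho> u^^k) e0)) ` {1..<n}"
  proof
    fix x assume x: "x \<in> {..<n} - {((\<rho> u^^k) e0)}"
    then obtain i where i: "i < n" "(\<rho> (other u)^^i) ((\<rho> u^^k) e0) = x" using cyc_reach[OF cg Tn, of x] by auto
    have "i \<noteq> 0" proof assume "i = 0" then show False using i x by simp qed
    then show "x \<in> (\<lambda>i. (\<rho> (other u)^^i) ((\<rho> u^^k) e0)) ` {1..<n}" using i by auto
  qed
qed

lemma cardA: "card ((\<lambda>i. (\<rho> u^^i) e0) ` {..k}) = Suc k"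
proof -
  have "inj_on (\<lambda>i. (\<rho> u^^i) e0) {..k}"
    unfolding inj_on_def using cyc_distinct[OF cf e0] k by auto
  then show ?thesis by (simp add: card_image)
qed

lemma card_fin: "card ((\<lambda>i. (\<rho> (other u)^^i) ((\<rho> u^^k) e0)) ` {1..<n} - ((\<lambda>i. (\<rho> u^^i) e0) ` {..k})) = n - 1 - k"
proof -
  have sub: "((\<lambda>i. (\<rho> u^^i) e0) ` {..k}) \<subseteq> {..<n}" using cyc_pow_maps[OF cf e0] by auto
  have "((\<rho> u^^k) e0) \<in> ((\<lambda>i. (\<rho> u^^i) e0) ` {..k})" by auto
  then have "(\<lambda>i. (\<rho> (other u)^^i) ((\<rho> u^^k) e0)) ` {1..<n} - ((\<lambda>i. (\<rho> u^^i) e0) ` {..k}) = {..<n} - ((\<lambda>i. (\<rho> u^^i) e0) ` {..k})" unfolding img_g by auto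
  moreover have "card ({..<n} - ((\<lambda>i. (\<rho> u^^i) e0) ` {..k})) = n - Suc k" using card_Diff_subset[OF _ sub] cardA by simp
  ultimately show ?thesis by simp
qed

lemma phase2_end: "\<exists>vis. (bstep \<rho> ((\<rho> u^^k) e0) ^^ (k+n)) ((e0, u), {(e0, u)}, (\<lambda>_. 0) :: config) = ((((\<rho> u^^k) e0), other u), vis, (((\<lambda>_. 0)(u := int k, other u := int (n - 1 - k))) :: config)) \<and>
   {..<n} \<times> {other u} \<subseteq> vis"
proof -
  have n1: "1 \<le> n" using k by simp
  obtain vis where st: "(bstep \<rho> ((\<rho> u^^k) e0) ^^ (k+n)) ((e0, u), {(e0, u)}, (\<lambda>_. 0) :: config) =
   (((\<rho> (other u)^^n) ((\<rho> u^^k) e0), other u), vis, (((\<lambda>_. 0)(u := int k, other u := int (card (((\<lambda>i. (\<rho> (other u)^^i) ((\<rho> u^^k) e0)) ` {1..<n}) - ((\<lambda>i. (\<rho> u^^i) e0) ` {..k}))))) :: config))"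
    and vy: "\<forall>i. 1 \<le> i \<and> i \<le> n \<longrightarrow> ((\<rho> (other u)^^i) ((\<rho> u^^k) e0), other u) \<in> vis"
    using phase2[OF n1] by blast
  have "{..<n} \<times> {other u} \<subseteq> vis"
  proof
    fix p assume "p \<in> {..<n} \<times> {other u}"
    then obtain x where x: "x < n" "p = (x, other u)" by auto
    then obtain i where i: "i < n" "(\<rho> (other u)^^i) ((\<rho> u^^k) e0) = x" using cyc_reach[OF cg Tn, of x] by auto
    show "p \<in> vis"
    proof (cases "i = 0")
      case True
      then have "(\<rho> (other u)^^n) ((\<rho> u^^k) e0) = x" using i cyc_period[OF cg Tn] by simp
      then show ?thesis using vy n1 x by auto
    next
      case False then show ?thesis using vy i x by auto
    qed
  qed
  then show ?thesis using st card_fin cyc_period[OF cg Tn] by auto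
qed

lemma phase3: "Suc k \<le> j \<Longrightarrow> j \<le> n \<longrightarrow> (\<exists>vis. (bstep \<rho> ((\<rho> u^^k) e0) ^^ (n+j)) ((e0, u), {(e0, u)}, (\<lambda>_. 0) :: config) =
   (((\<rho> u^^j) e0, u), vis, (((\<lambda>_. 0)(u := int k, other u := int (n - 1 - k))) :: config)) \<and> {..<n} \<times> {other u} \<subseteq> vis)"
proof (induction j rule: nat_induct_at_least)
  case base
  obtain vis where st: "(bstep \<rho> ((\<rho> u^^k) e0) ^^ (k+n)) ((e0, u), {(e0, u)}, (\<lambda>_. 0) :: config) = ((((\<rho> u^^k) e0), other u), vis, (((\<lambda>_. 0)(u := int k, other u := int (n - 1 - k))) :: config))"
    and vy: "{..<n} \<times> {other u} \<subseteq> vis" using phase2_end by blast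
  have "(bstep \<rho> ((\<rho> u^^k) e0) ^^ (n + Suc k)) ((e0, u), {(e0, u)}, (\<lambda>_. 0) :: config) = bstep \<rho> ((\<rho> u^^k) e0) ((bstep \<rho> ((\<rho> u^^k) e0) ^^ (k+n)) ((e0, u), {(e0, u)}, (\<lambda>_. 0) :: config))"
    by (simp add: add.commute)
  also have "\<dots> = (((\<rho> u^^Suc k) e0, u), insert ((\<rho> u^^Suc k) e0, u) vis, (((\<lambda>_. 0)(u := int k, other u := int (n - 1 - k))) :: config))"
    unfolding st by (subst bstep_tree) auto
  finally show ?case using vy by blast
next
  case (Suc j)
  show ?case
  proof
    assume sj: "Suc j \<le> n"
    then obtain vis where st: "(bstep \<rho> ((\<rho> u^^k) e0) ^^ (n+j)) ((e0, u), {(e0, u)}, (\<lambda>_. 0) :: config) = (((\<rho> u^^j) e0, u), vis, (((\<lambda>_. 0)(u := int k, other u := int (n - 1 - k))) :: config))"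
      and vy: "{..<n} \<times> {other u} \<subseteq> vis"
      using Suc.IH Suc_leD[OF sj] by blast
    have ne: "(\<rho> u^^j) e0 \<noteq> ((\<rho> u^^k) e0)"
      using cyc_distinct[OF cf e0, of j k] Suc.hyps sj k by auto
    have inv: "((\<rho> u^^j) e0, other u) \<in> vis" using vy cyc_pow_maps[OF cf e0, of j] by auto
    have "(bstep \<rho> ((\<rho> u^^k) e0) ^^ (n + Suc j)) ((e0, u), {(e0, u)}, (\<lambda>_. 0) :: config) = bstep \<rho> ((\<rho> u^^k) e0) ((bstep \<rho> ((\<rho> u^^k) e0) ^^ (n+j)) ((e0, u), {(e0, u)}, (\<lambda>_. 0) :: config))"
      by simp
    also have "\<dots> = (((\<rho> u^^Suc j) e0, u), insert ((\<rho> u^^Suc j) e0, u) vis, (((\<lambda>_. 0)(u := int k, other u := int (n - 1 - k))) :: config))"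
      unfolding st by (subst bstep_non[OF ne]) (simp add: inv)
    finally show "\<exists>vis. (bstep \<rho> ((\<rho> u^^k) e0) ^^ (n + Suc j)) ((e0, u), {(e0, u)}, (\<lambda>_. 0) :: config) =
      (((\<rho> u^^Suc j) e0, u), vis, (((\<lambda>_. 0)(u := int k, other u := int (n - 1 - k))) :: config)) \<and> {..<n} \<times> {other u} \<subseteq> vis" using vy by blast
  qed
qed

lemma bdiv_eq: "bernardi_div \<rho> u e0 ((\<rho> u^^k) e0) = (((\<lambda>_. 0)(u := int k, other u := int (n - 1 - k))) :: config)"
proof -
  have n1: "1 \<le> n" using k by simp
  let ?c = "bstep \<rho> ((\<rho> u^^k) e0)"
  have fst_ne: "fst ((?c^^i) ((e0, u), {(e0, u)}, (\<lambda>_. 0) :: config)) \<noteq> (e0, u)" if i: "1 \<le> i" "i < 2*n" for i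
  proof -
    consider "i \<le> k" | "k < i" "i \<le> k + n" | "k + n < i" by linarith
    then show ?thesis
    proof cases
      case 1
      then have "(\<rho> u^^i) e0 \<noteq> e0" using cyc_distinct[OF cf e0, of i 0] i k by auto
      then show ?thesis using phase1[OF 1] by simp
    next
      case 2
      define j where "j = i - k"
      have j: "i = k + j" "1 \<le> j" "j \<le> n" using 2 unfolding j_def by auto
      then show ?thesis using phase2[OF j(2)] by auto
    next
      case 3
      define j where "j = i - n"
      have j: "i = n + j" "Suc k \<le> j" "j < n" using 3 i unfolding j_def by auto
      then have "(\<rho> u^^j) e0 \<noteq> e0" using cyc_distinct[OF cf e0, of j 0] by auto
      then show ?thesis using phase3[OF j(2)] j by auto
    qed
  qed
  obtain vis where fin: "(?c^^(n+n)) ((e0, u), {(e0, u)}, (\<lambda>_. 0) :: config) = (((\<rho> u^^n) e0, u), vis, (((\<lambda>_. 0)(u := int k, other u := int (n - 1 - k))) :: config))"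
    using phase3[of n] k by auto
  have "while (\<lambda>s. fst s \<noteq> (e0, u)) ?c (?c ((e0, u), {(e0, u)}, (\<lambda>_. 0) :: config)) = (?c^^(2*n-1)) (?c ((e0, u), {(e0, u)}, (\<lambda>_. 0) :: config))"
  proof (rule while_funpow)
    show "\<forall>i<2*n-1. fst ((?c^^i) (?c ((e0, u), {(e0, u)}, (\<lambda>_. 0) :: config))) \<noteq> (e0, u)"
    proof (intro allI impI)
      fix i assume "i < 2*n-1"
      then have "fst ((?c^^Suc i) ((e0, u), {(e0, u)}, (\<lambda>_. 0) :: config)) \<noteq> (e0, u)" by (intro fst_ne) auto
      then show "fst ((?c^^i) (?c ((e0, u), {(e0, u)}, (\<lambda>_. 0) :: config))) \<noteq> (e0, u)" by (metis funpow_Suc_right o_apply)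
    qed
    have "(?c^^(2*n-1)) (?c ((e0, u), {(e0, u)}, (\<lambda>_. 0) :: config)) = (?c^^(n+n)) ((e0, u), {(e0, u)}, (\<lambda>_. 0) :: config)"
      proof -
      have "Suc (2*n-1) = n+n" using n1 by simp
      then show ?thesis by (metis funpow_Suc')
    qed
    then show "\<not> fst ((?c^^(2*n-1)) (?c ((e0, u), {(e0, u)}, (\<lambda>_. 0) :: config))) \<noteq> (e0, u)"
      using fin cyc_period[OF cf e0] by simp
  qed
  also have "\<dots> = (?c^^(n+n)) ((e0, u), {(e0, u)}, (\<lambda>_. 0) :: config)"
    proof -
      have "Suc (2*n-1) = n+n" using n1 by simp
      then show ?thesis by (metis funpow_Suc')
    qed
  finally show ?thesis unfolding bernardi_div_def Let_def using fin by simp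
qed

end



lemma vtx2: "x = u \<or> x = other u" by (cases x; cases u) auto

lemma lin_equiv_char:
  assumes n: "n \<ge> 1" and k: "k < n" and k': "k' < n" and dg: "deg D = 0"
  shows "lin_equiv n ((\<lambda>_. 0)(u := int k', other u := int (n - 1 - k')))
            (\<lambda>x. ((\<lambda>_. 0)(u := int k, other u := int (n - 1 - k))) x + D x)
         \<longleftrightarrow> int k' = (int k + D u) mod int n" (is "?L \<longleftrightarrow> ?R")
proof
  assume ?L
  then obtain a where a: "\<forall>x. ((\<lambda>_. 0)(u := int k, other u := int (n - 1 - k))) x + D x =
      ((\<lambda>_. 0)(u := int k', other u := int (n - 1 - k'))) x - a x * int n + a (other x) * int n"
    unfolding lin_equiv_def by blast
  have au: "int k + D u = int k' - a u * int n + a (other u) * int n" using a[rule_format, of u] by simp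
  have "int k + D u = int k' + (a (other u) - a u) * int n" unfolding au by (simp add: algebra_simps)
  then have "(int k + D u) mod int n = (int k' + (a (other u) - a u) * int n) mod int n" by (simp only:)
  also have "\<dots> = int k' mod int n" by (rule mod_mult_self1)
  also have "\<dots> = int k'" using k' by simp
  finally show ?R by simp
next
  assume R: ?R
  define q where "q = (int k + D u) div int n"
  have kq: "int k + D u = int k' + q * int n" using R div_mult_mod_eq[of "int k + D u" "int n"] unfolding q_def
    by linarith
  have Dy: "D (other u) = - D u" using dg unfolding deg_def by (cases u) simp_all
  show ?L unfolding lin_equiv_def
  proof (rule exI[of _ "\<lambda>x. if x = u then - q else 0"], rule allI)
    fix x
    consider "x = u" | "x = other u" using vtx2 by blast
    then show "((\<lambda>_. 0)(u := int k, other u := int (n - 1 - k))) x + D x =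
      ((\<lambda>_. 0)(u := int k', other u := int (n - 1 - k'))) x - (if x = u then - q else 0) * int n
       + (if other x = u then - q else 0) * int n"
    proof cases
      case 1 then show ?thesis using kq by simp
    next
      case 2
      have "int (n - 1 - k) = int n - 1 - int k" "int (n - 1 - k') = int n - 1 - int k'" using k k' by auto
      then show ?thesis using 2 kq Dy by simp
    qed
  qed
qed

lemma bern_eq:
  assumes r: "ribbon2 n \<rho>" and e0: "e0 < n" and T: "T < n" and dg: "deg D = 0"
  shows "bernardi n \<rho> u e0 D T = (\<rho> u ^^ nat (D u mod int n)) T"
proof -
  have c: "cyclic_order n (\<rho> u)" and n: "n \<ge> 1" using r unfolding ribbon2_def by auto
  obtain k where k: "k < n" "(\<rho> u ^^ k) e0 = T" using cyc_reach[OF c e0 T] by auto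
  define m where "m = nat ((int k + D u) mod int n)"
  have h0: "0 \<le> (int k + D u) mod int n" "(int k + D u) mod int n < int n" using n by simp_all
  then have m: "m < n" "int m = (int k + D u) mod int n" unfolding m_def by (simp_all add: nat_less_iff)
  let ?T = "(\<rho> u ^^ m) e0"
  have "(\<rho> u ^^ nat (D u mod int n)) T = (\<rho> u ^^ (nat (D u mod int n) + k)) e0"
    using k by (simp add: funpow_add)
  also have "\<dots> = (\<rho> u ^^ ((nat (D u mod int n) + k) mod n)) e0" by (rule cyc_mod[OF c e0])
  also have "(nat (D u mod int n) + k) mod n = m"
  proof -
    have "int ((nat (D u mod int n) + k) mod n) = (D u mod int n + int k) mod int n"
      using n by (simp add: zmod_int)
    also have "\<dots> = (int k + D u) mod int n" by (metis mod_add_right_eq add.commute)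
    finally show ?thesis using m(2) by simp
  qed
  finally have Teq: "(\<rho> u ^^ nat (D u mod int n)) T = ?T" .
  have bk: "bernardi_div \<rho> u e0 T = (\<lambda>_. 0)(u := int k, other u := int (n - 1 - k))"
    using bdiv_eq[OF r e0 k(1), where u=u] k(2) by simp
  have P: "T' < n \<and> lin_equiv n (bernardi_div \<rho> u e0 T') (\<lambda>x. bernardi_div \<rho> u e0 T x + D x)
       \<longleftrightarrow> T' = ?T" for T'
  proof
    assume h: "T' < n \<and> lin_equiv n (bernardi_div \<rho> u e0 T') (\<lambda>x. bernardi_div \<rho> u e0 T x + D x)"
    then obtain k' where k': "k' < n" "(\<rho> u ^^ k') e0 = T'" using cyc_reach[OF c e0] by blast
    have bk': "bernardi_div \<rho> u e0 T' = (\<lambda>_. 0)(u := int k', other u := int (n - 1 - k'))"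
      using bdiv_eq[OF r e0 k'(1), where u=u] k'(2) by simp
    have "lin_equiv n (bernardi_div \<rho> u e0 T') (\<lambda>x. bernardi_div \<rho> u e0 T x + D x)" using h by blast
    then have "int k' = (int k + D u) mod int n"
      unfolding bk' bk using lin_equiv_char[OF n k(1) k'(1) dg, of u] by blast
    then have "k' = m" using m by simp
    then show "T' = ?T" using k' by simp
  next
    assume h: "T' = ?T"
    have bm: "bernardi_div \<rho> u e0 ?T = (\<lambda>_. 0)(u := int m, other u := int (n - 1 - m))"
      using bdiv_eq[OF r e0 m(1), where u=u] by simp
    have "lin_equiv n (bernardi_div \<rho> u e0 ?T) (\<lambda>x. bernardi_div \<rho> u e0 T x + D x)"
      unfolding bm bk using lin_equiv_char[OF n k(1) m(1) dg, of u] m(2) by blast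
    then show "T' < n \<and> lin_equiv n (bernardi_div \<rho> u e0 T') (\<lambda>x. bernardi_div \<rho> u e0 T x + D x)"
      using h cyc_pow_maps[OF c e0] by simp
  qed
  have "bernardi n \<rho> u e0 D T = ?T"
    unfolding bernardi_def by (rule the_equality) (use P in blast)+
  then show ?thesis using Teq by simp
qed




lemma cycles_conj:
  assumes bij: "bij_betw \<phi> {..<n} {..<n}" and cm: "\<forall>x e. e < n \<longrightarrow> \<rho> x e < n"
    and comm: "\<forall>x e. e < n \<longrightarrow> \<phi> (\<rho> x e) = \<rho>' x (\<phi> e)"
  shows "num_cycles n \<rho> = num_cycles n \<rho>'"
proof -
  define \<Phi> where "\<Phi> = (\<lambda>(e::nat, x::vtx). (\<phi> e, x))"
  have injP: "inj_on \<Phi> (darts n)"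
    using bij unfolding bij_betw_def inj_on_def \<Phi>_def darts_def by auto
  have imP: "\<Phi> ` darts n = darts n"
  proof
    show "\<Phi> ` darts n \<subseteq> darts n" using bij unfolding bij_betw_def \<Phi>_def darts_def by auto
    show "darts n \<subseteq> \<Phi> ` darts n"
    proof
      fix p assume "p \<in> darts n"
      then obtain e x where p: "p = (e, x)" "e < n" unfolding darts_def by auto
      then have "e \<in> \<phi> ` {..<n}" using bij unfolding bij_betw_def by simp
      then obtain e' where "e' < n" "\<phi> e' = e" by auto
      then show "p \<in> \<Phi> ` darts n" using p unfolding \<Phi>_def darts_def by force
    qed
  qed
  have fsd: "face_step \<rho> a \<in> darts n" if "a \<in> darts n" for a
    using that cm unfolding darts_def face_step_def by auto
  have fsc: "face_step \<rho>' (\<Phi> a) = \<Phi> (face_step \<rho> a)" if "a \<in> darts n" for a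
    using that comm unfolding darts_def face_step_def \<Phi>_def by auto
  have iter: "(face_step \<rho>' ^^ k) (\<Phi> a) = \<Phi> ((face_step \<rho> ^^ k) a) \<and> (face_step \<rho> ^^ k) a \<in> darts n"
    if "a \<in> darts n" for a k
  proof (induction k)
    case 0 then show ?case using that by simp
  next
    case (Suc k) then show ?case using fsc fsd by simp
  qed
  define R where "R = {(a, b). a \<in> darts n \<and> b \<in> darts n \<and> (\<exists>k. (face_step \<rho> ^^ k) a = b)}"
  define R' where "R' = {(a, b). a \<in> darts n \<and> b \<in> darts n \<and> (\<exists>k. (face_step \<rho>' ^^ k) a = b)}"
  have rel: "(\<Phi> a, \<Phi> b) \<in> R' \<longleftrightarrow> (a, b) \<in> R" if a: "a \<in> darts n" and b: "b \<in> darts n" for a b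
  proof
    assume "(\<Phi> a, \<Phi> b) \<in> R'"
    then obtain k where "(face_step \<rho>' ^^ k) (\<Phi> a) = \<Phi> b" unfolding R'_def by auto
    then have "\<Phi> ((face_step \<rho> ^^ k) a) = \<Phi> b" using iter[OF a] by simp
    then have "(face_step \<rho> ^^ k) a = b" using injP iter[OF a] b unfolding inj_on_def by blast
    then show "(a, b) \<in> R" using a b unfolding R_def by auto
  next
    assume "(a, b) \<in> R"
    then obtain k where "(face_step \<rho> ^^ k) a = b" unfolding R_def by auto
    then have "(face_step \<rho>' ^^ k) (\<Phi> a) = \<Phi> b" using iter[OF a] by simp
    then show "(\<Phi> a, \<Phi> b) \<in> R'" using a b imP unfolding R'_def by blast
  qed
  have cls: "R' `` {\<Phi> a} = \<Phi> ` (R `` {a})" if a: "a \<in> darts n" for a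
  proof
    show "R' `` {\<Phi> a} \<subseteq> \<Phi> ` (R `` {a})"
    proof
      fix z assume "z \<in> R' `` {\<Phi> a}"
      then have z: "(\<Phi> a, z) \<in> R'" "z \<in> darts n" unfolding R'_def by auto
      then obtain b where b: "b \<in> darts n" "z = \<Phi> b" using imP by (metis imageE)
      then have "(a, b) \<in> R" using rel[OF a b(1)] z by simp
      then show "z \<in> \<Phi> ` (R `` {a})" using b by auto
    qed
    show "\<Phi> ` (R `` {a}) \<subseteq> R' `` {\<Phi> a}"
    proof
      fix z assume "z \<in> \<Phi> ` (R `` {a})"
      then obtain b where b: "(a, b) \<in> R" "z = \<Phi> b" by auto
      then have "b \<in> darts n" unfolding R_def by auto
      then show "z \<in> R' `` {\<Phi> a}" using rel[OF a] b by auto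
    qed
  qed
  have Q: "darts n // R' = (image \<Phi>) ` (darts n // R)"
  proof
    show "darts n // R' \<subseteq> (image \<Phi>) ` (darts n // R)"
    proof
      fix C assume "C \<in> darts n // R'"
      then obtain z where z: "z \<in> darts n" "C = R' `` {z}" by (auto elim: quotientE)
      then obtain a where a: "a \<in> darts n" "z = \<Phi> a" using imP by (metis imageE)
      then have "C = \<Phi> ` (R `` {a})" using cls z by simp
      moreover have "R `` {a} \<in> darts n // R" using a(1) by (rule quotientI)
      ultimately show "C \<in> (image \<Phi>) ` (darts n // R)" by blast
    qed
    show "(image \<Phi>) ` (darts n // R) \<subseteq> darts n // R'"
    proof
      fix C assume "C \<in> (image \<Phi>) ` (darts n // R)"
      then obtain a where a: "a \<in> darts n" "C = \<Phi> ` (R `` {a})" by (auto elim: quotientE)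
      then have "C = R' `` {\<Phi> a}" using cls by simp
      moreover have "\<Phi> a \<in> darts n" using a imP by blast
      ultimately show "C \<in> darts n // R'" by (simp add: quotientI)
    qed
  qed
  have "darts n // R \<subseteq> Pow (darts n)" unfolding R_def by (auto elim!: quotientE)
  then have "inj_on (image \<Phi>) (darts n // R)" using inj_on_image_Pow[OF injP] by (rule inj_on_subset[rotated])
  then have "card (darts n // R') = card (darts n // R)" unfolding Q by (rule card_image)
  then show ?thesis unfolding num_cycles_def R_def R'_def by simp
qed

lemma one_step: "cyclic_order n f \<Longrightarrow> e < n \<Longrightarrow> (f ^^ nat (1 mod int n)) e = f e"
proof -
  assume c: "cyclic_order n f" and e: "e < n"
  have "nat (1 mod int n) = 1 mod n" by (metis nat_int zmod_int of_nat_1)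
  then show ?thesis using cyc_mod[OF c e, of 1] by simp
qed

theorem proposition3p6:
  fixes n :: nat and \<rho> \<rho>' :: "vtx \<Rightarrow> nat \<Rightarrow> nat" and \<phi> :: "nat \<Rightarrow> nat"
    and b b' :: "vtx \<Rightarrow> nat"
  assumes "ribbon2 n \<rho>" and "ribbon2 n \<rho>'"
    and "\<forall>u. b u < n" and "\<forall>u. b' u < n"
    and "bij_betw \<phi> {..<n} {..<n}"
    and "(\<forall>u D T. deg D = 0 \<longrightarrow> T < n \<longrightarrow>
            \<phi> (rotor_routing n \<rho> u D T) = rotor_routing n \<rho>' u D (\<phi> T))
       \<or> (\<forall>u D T. deg D = 0 \<longrightarrow> T < n \<longrightarrow>
            \<phi> (bernardi n \<rho> u (b u) D T) = bernardi n \<rho>' u (b' u) D (\<phi> T))"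
  shows "genus n \<rho> = genus n \<rho>'"
proof -
  note r = assms(1) and r' = assms(2)
  have c: "\<And>x. cyclic_order n (\<rho> x)" and c': "\<And>x. cyclic_order n (\<rho>' x)"
    using r r' unfolding ribbon2_def by auto
  have key: "\<forall>x e. e < n \<longrightarrow> \<phi> (\<rho> x e) = \<rho>' x (\<phi> e)"
  proof (intro allI impI)
    fix x e assume e: "e < n"
    have pe: "\<phi> e < n" using assms(5) e unfolding bij_betw_def by auto
    define D :: config where "D = (\<lambda>z. if z = x then 1 else -1)"
    have dg: "deg D = 0" unfolding deg_def D_def by (cases x) auto
    have Dx: "D x = 1" unfolding D_def by simp
    from assms(6) show "\<phi> (\<rho> x e) = \<rho>' x (\<phi> e)"
    proof
      assume h: "\<forall>u D T. deg D = 0 \<longrightarrow> T < n \<longrightarrow>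
            \<phi> (rotor_routing n \<rho> u D T) = rotor_routing n \<rho>' u D (\<phi> T)"
      have "\<phi> (rotor_routing n \<rho> (other x) D e) = rotor_routing n \<rho>' (other x) D (\<phi> e)"
        using h dg e by blast
      then show ?thesis
        using rr_eq[OF r e, of "other x" D] rr_eq[OF r' pe, of "other x" D] Dx
          one_step[OF c e] one_step[OF c' pe] by simp
    next
      assume h: "\<forall>u D T. deg D = 0 \<longrightarrow> T < n \<longrightarrow>
            \<phi> (bernardi n \<rho> u (b u) D T) = bernardi n \<rho>' u (b' u) D (\<phi> T)"
      have "\<phi> (bernardi n \<rho> x (b x) D e) = bernardi n \<rho>' x (b' x) D (\<phi> e)"
        using h dg e by blast
      then show ?thesis
        using bern_eq[OF r _ e dg, of "b x" x] bern_eq[OF r' _ pe dg, of "b' x" x] assms(3,4) Dx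
          one_step[OF c e] one_step[OF c' pe] by simp
    qed
  qed
  have cm: "\<forall>x e. e < n \<longrightarrow> \<rho> x e < n" using cyc_maps[OF c] by blast
  have "num_cycles n \<rho> = num_cycles n \<rho>'" by (rule cycles_conj[OF assms(5) cm key])
  then show ?thesis unfolding genus_def by simp
qed


end
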